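(* Let $A\in\mathbb R^{m\times n}$ with $A\ge\mathbf 0$, $b\in\mathbb R^m$, $c\in\mathbb R^n$, and suppose the linear program $(P)$: $\max c^\intercal x$ s.t. $Ax\le b$, $x\ge\mathbf 0$ is feasible. Then $(P)$ is unbounded if and only if there exists $j^*\in[n]$ such that $c_{j^*}>0$ and the $j^*$-th column of $A$ is the zero vector.
   Context: Inequalities are componentwise. $(P)$ is unbounded if its objective is unbounded above on its feasible set. *)

theory Defs
  imports "HOL-Analysis.Analysis"
begin

end

theory Submission
  imports Defs
begin

theorem proposition3:
  fixes A :: "real ^ 'n ^ 'm" and b :: "real ^ 'm" and c :: "real ^ 'n"
  assumes A_nonneg: "\<forall>i j. A $ i $ j \<ge> 0"
    and feasible: "\<exists>x :: real ^ 'n. (\<forall>i. (A *v x) $ i \<le> b $ i) \<and> (\<forall>j. x $ j \<ge> 0)"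
  shows "(\<forall>M :: real. \<exists>x :: real ^ 'n. (\<forall>i. (A *v x) $ i \<le> b $ i) \<and> (\<forall>j. x $ j \<ge> 0) \<and> c \<bullet> x > M)
         \<longleftrightarrow> (\<exists>j. c $ j > 0 \<and> (\<forall>i. A $ i $ j = 0))"
proof
  assume unb: "\<forall>M :: real. \<exists>x :: real ^ 'n. (\<forall>i. (A *v x) $ i \<le> b $ i) \<and> (\<forall>j. x $ j \<ge> 0) \<and> c \<bullet> x > M"
  show "\<exists>j. c $ j > 0 \<and> (\<forall>i. A $ i $ j = 0)"
  proof (rule ccontr)
    assume "\<not> ?thesis"
    then have "\<forall>j. \<exists>i. c $ j > 0 \<longrightarrow> A $ i $ j > 0"
      using A_nonneg by (metis order_less_le)
    then obtain r where r: "\<And>j. c $ j > 0 \<Longrightarrow> A $ r j $ j > 0" by metis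
    define B where "B = (\<Sum>j\<in>UNIV. if c $ j > 0 then c $ j * (b $ r j / A $ r j $ j) else 0)"
    obtain x :: "real ^ 'n" where x: "\<forall>i. (A *v x) $ i \<le> b $ i" "\<forall>j. x $ j \<ge> 0" "c \<bullet> x > B"
      using unb by blast
    have "c \<bullet> x = (\<Sum>j\<in>UNIV. c $ j * x $ j)" by (simp add: inner_vec_def)
    also have "\<dots> \<le> B" unfolding B_def
    proof (rule sum_mono)
      fix j
      show "c $ j * x $ j \<le> (if c $ j > 0 then c $ j * (b $ r j / A $ r j $ j) else 0)"
      proof (cases "c $ j > 0")
        case True
        have "A $ r j $ j * x $ j \<le> (\<Sum>k\<in>UNIV. A $ r j $ k * x $ k)"
          by (rule member_le_sum) (use A_nonneg x(2) in auto)
        also have "\<dots> \<le> b $ r j" using x(1) by (simp add: matrix_vector_mult_def)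
        finally have "x $ j \<le> b $ r j / A $ r j $ j" using r[OF True]
          by (simp add: pos_le_divide_eq mult.commute)
        then show ?thesis using True by (simp add: mult_left_mono del: times_divide_eq_right)
      next
        case False
        then show ?thesis using x(2) by (simp add: mult_nonpos_nonneg)
      qed
    qed
    finally show False using x(3) by simp
  qed
next
  assume "\<exists>j. c $ j > 0 \<and> (\<forall>i. A $ i $ j = 0)"
  then obtain j where j: "c $ j > 0" "\<forall>i. A $ i $ j = 0" by blast
  obtain x0 :: "real ^ 'n" where x0: "\<forall>i. (A *v x0) $ i \<le> b $ i" "\<forall>j. x0 $ j \<ge> 0"
    using feasible by blast
  show "\<forall>M :: real. \<exists>x :: real ^ 'n. (\<forall>i. (A *v x) $ i \<le> b $ i) \<and> (\<forall>j. x $ j \<ge> 0) \<and> c \<bullet> x > M"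
  proof
    fix M :: real
    define t where "t = max 0 ((M - c \<bullet> x0) / c $ j + 1)"
    define x where "x = x0 + t *\<^sub>R axis j 1"
    have t0: "t \<ge> 0" by (simp add: t_def)
    have "A *v x = A *v x0 + t *\<^sub>R (A *v axis j 1)"
      by (simp add: x_def matrix_vector_right_distrib matrix_vector_mult_scaleR)
    moreover have "A *v axis j 1 = 0"
      using j(2) by (simp add: vec_eq_iff matrix_vector_mult_def axis_def if_distrib cong: if_cong)
    ultimately have Ax: "A *v x = A *v x0" by simp
    have cx: "c \<bullet> x = c \<bullet> x0 + t * c $ j"
      by (simp add: x_def inner_add_right inner_axis)
    have h1: "t * c $ j \<ge> ((M - c \<bullet> x0) / c $ j + 1) * c $ j"
      using j(1) by (intro mult_right_mono) (auto simp: t_def)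
    have h2: "((M - c \<bullet> x0) / c $ j + 1) * c $ j = M - c \<bullet> x0 + c $ j" using j(1) by (simp add: field_simps)
    have "c \<bullet> x > M" using cx j(1) h1 h2 by linarith
    moreover have "\<forall>k. x $ k \<ge> 0" using x0(2) t0 by (simp add: x_def axis_def)
    ultimately show "\<exists>x :: real ^ 'n. (\<forall>i. (A *v x) $ i \<le> b $ i) \<and> (\<forall>j. x $ j \<ge> 0) \<and> c \<bullet> x > M"
      using Ax x0(1) by metis
  qed
qed

end
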